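(* Let $a,b>1$ be such that $\log_b(a)\in\mathbb{Q}$, and write $\log_b(a)=q/p$ with $p,q$ relatively prime positive integers. Then, as operators from $L^2(\mathbb{R}_+)$ to $L^2(\mathbb{R})$, for all $s,m\in\mathbb{Z}$, \[ D_\varphi D_{a^{sq}} = T_{-sp} D_\varphi \qquad\text{and}\qquad D_\varphi M_{\gamma_m} = e^{2\pi i m/(b-1)}\, M_{m} D_\varphi . \]
   Context: For $b>1$ and $m\in\mathbb{Z}$, $\gamma_m:\mathbb{R}_+\to\mathbb{C}$ is the function satisfying $\gamma_m(bx)=\gamma_m(x)$ for all $x>0$ and $\gamma_m(x)=e^{2\pi i m x/(b-1)}$ for $x\in[1,b)$. For a bounded function $\eta$, $M_\eta$ denotes multiplication by $\eta$ (on $L^2(\mathbb{R}_+)$ or $L^2(\mathbb{R})$); for a real number $c$, $M_c$ on $L^2(\mathbb{R})$ is multiplication by $x\mapsto e^{2\pi i c x}$. For $a>0$, $D_a f(x)=a^{1/2}f(ax)$ (on $L^2(\mathbb{R}_+)$ or $L^2(\mathbb{R})$), and for $c\in\mathbb{R}$, $T_c f(x)=f(x-c)$ on $L^2(\mathbb{R})$. The function $\varphi:\mathbb{R}\to\mathbb{R}_+$ is defined by $\varphi(x)=b^k\big((b-1)x+(1-(b-1)k)\big)$ for $x\in[k,k+1)$, $k\in\mathbb{Z}$ (the piecewise linear interpolant of the points $(k,b^k)$), and $D_\varphi:L^2(\mathbb{R}_+)\to L^2(\mathbb{R})$ is the (unitary) operator $(D_\varphi h)(x)=\sqrt{\varphi'(x)}\,h(\varphi(x))$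 for a.e. $x\in\mathbb{R}$. *)

theory Defs
  imports "HOL-Analysis.Analysis"
begin

text \<open>The piecewise linear interpolant of the points (k, b^k).\<close>
definition phi :: "real \<Rightarrow> real \<Rightarrow> real" where
  "phi b x = (let k = \<lfloor>x\<rfloor> in b powr of_int k * ((b - 1) * x + (1 - (b - 1) * of_int k)))"

text \<open>gamma_m: multiplicatively b-periodic on R_+, equal to exp(2 pi i m x/(b-1)) on [1,b).
  For x > 0, with k = floor(log_b x), x / b^k lies in [1,b). Values for x <= 0 are irrelevant.\<close>
definition gamma :: "real \<Rightarrow> int \<Rightarrow> real \<Rightarrow> complex" where
  "gamma b m x = (if x > 0 then
      exp (2 * pi * \<i> * of_int m * of_real (x / b powr of_int \<lfloor>log b x\<rfloor>) / of_real (b - 1))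
    else 0)"

definition dil :: "real \<Rightarrow> (real \<Rightarrow> complex) \<Rightarrow> real \<Rightarrow> complex" where
  "dil a f x = of_real (sqrt a) * f (a * x)"

definition transl :: "real \<Rightarrow> (real \<Rightarrow> complex) \<Rightarrow> real \<Rightarrow> complex" where
  "transl c f x = f (x - c)"

definition mult_op :: "(real \<Rightarrow> complex) \<Rightarrow> (real \<Rightarrow> complex) \<Rightarrow> real \<Rightarrow> complex" where
  "mult_op eta f x = eta x * f x"

definition modul :: "real \<Rightarrow> (real \<Rightarrow> complex) \<Rightarrow> real \<Rightarrow> complex" where
  "modul c f x = exp (2 * pi * \<i> * of_real (c * x)) * f x"

text \<open>D_phi h(x) = sqrt(phi'(x)) h(phi(x)); phi' exists off the integers (a null set).\<close>
definition Dphi :: "real \<Rightarrow> (real \<Rightarrow> complex) \<Rightarrow> real \<Rightarrow> complex" where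
  "Dphi b h x = of_real (sqrt (deriv (phi b) x)) * h (phi b x)"

end

theory Submission
  imports Defs
begin

lemma phi_shift:
  fixes n :: int assumes "b > 1"
  shows "phi b (x + of_int n) = b powr of_int n * phi b x"
proof -
  have fl: "\<lfloor>x + of_int n\<rfloor> = \<lfloor>x\<rfloor> + n" by simp
  have "b powr of_int (\<lfloor>x\<rfloor> + n) = b powr of_int n * b powr of_int \<lfloor>x\<rfloor>"
    by (simp add: powr_add)
  then show ?thesis unfolding phi_def Let_def fl
    by (simp add: algebra_simps)
qed

lemma phi_deriv:
  assumes "b > 1" and "x \<notin> \<int>"
  shows "deriv (phi b) x = b powr of_int \<lfloor>x\<rfloor> * (b - 1)"
proof -
  define k where "k = \<lfloor>x\<rfloor>"
  define g where "g = (\<lambda>y. b powr of_int k * ((b - 1) * y + (1 - (b - 1) * of_int k)))"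
  have kx: "of_int k < x" using assms(2) unfolding k_def
    by (metis Ints_of_int of_int_floor_le order_le_less)
  have xk: "x < of_int k + 1" unfolding k_def by linarith
  have dg: "(g has_field_derivative b powr of_int k * (b - 1)) (at x)"
    unfolding g_def by (auto intro!: derivative_eq_intros)
  have "(phi b has_field_derivative b powr of_int k * (b - 1)) (at x)"
  proof (rule has_field_derivative_transform_within_open[OF dg, of "{of_int k<..<of_int k + 1}"])
    fix y :: real assume "y \<in> {of_int k<..<of_int k + 1}"
    then have "\<lfloor>y\<rfloor> = k" by (simp add: floor_eq_iff)
    then show "g y = phi b y" unfolding g_def phi_def Let_def by simp
  qed (use kx xk in auto)
  then show ?thesis unfolding k_def by (rule DERIV_imp_deriv)
qed

lemma gamma_phi:
  assumes "b > 1"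
  shows "gamma b m (phi b x) = exp (2 * pi * \<i> * of_int m / of_real (b - 1)) * exp (2 * pi * \<i> * of_real (of_int m * x))"
proof -
  define k where "k = \<lfloor>x\<rfloor>"
  define f where "f = (b - 1) * (x - of_int k) + 1"
  have t0: "0 \<le> x - of_int k" "x - of_int k < 1" unfolding k_def by linarith+
  have f1: "1 \<le> f" unfolding f_def using t0 assms by simp
  have "(b - 1) * (x - of_int k) < (b - 1) * 1"
    using t0 assms by (intro mult_strict_left_mono) auto
  then have fb: "f < b" unfolding f_def by simp
  have ph: "phi b x = b powr of_int k * f" unfolding phi_def Let_def k_def[symmetric] f_def
    by (simp add: algebra_simps)
  have pos: "phi b x > 0" using ph f1 assms by simp
  have lg: "log b (phi b x) = of_int k + log b f"
    using ph f1 assms by (simp add: log_mult log_powr_cancel)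
  have "0 \<le> log b f" using f1 assms by simp
  moreover have "log b f < 1" using fb f1 assms by (simp add: log_less_one_cancel_iff)
  ultimately have fl: "\<lfloor>log b (phi b x)\<rfloor> = k" unfolding lg by (simp add: floor_eq_iff)
  have q: "phi b x / b powr of_int k = f" using ph assms by simp
  have "gamma b m (phi b x) = exp (2 * pi * \<i> * of_int m * of_real f / of_real (b - 1))"
    unfolding gamma_def using pos fl q by simp
  also have "2 * pi * \<i> * of_int m * of_real f / of_real (b - 1) =
     2 * pi * \<i> * of_int m / of_real (b - 1) + 2 * pi * \<i> * of_real (of_int m * x)
     - (2 * of_int (m * k) * pi) * \<i>"
    using assms unfolding f_def by (simp add: field_simps)
  also have "exp \<dots> = exp (2 * pi * \<i> * of_int m / of_real (b - 1)) * exp (2 * pi * \<i> * of_real (of_int m * x))"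
    by (simp only: exp_diff exp_add exp_integer_2pi[OF Ints_of_int]) simp
  finally show ?thesis .
qed

theorem lemma2p1:
  fixes a b :: real and p q :: nat
  assumes "a > 1" and "b > 1"
    and "p > 0" and "q > 0" and "coprime p q"
    and "log b a = real p / real q"
  shows "\<forall>(s::int) (m::int) (h::real \<Rightarrow> complex).
           h \<in> borel_measurable lborel \<and> set_integrable lborel {0<..} (\<lambda>x. (norm (h x))\<^sup>2) \<longrightarrow>
           (AE x in lborel. Dphi b (dil (a powr (of_int s * real q)) h) x
                              = transl (- (of_int s * real p)) (Dphi b h) x) \<and>
           (AE x in lborel. Dphi b (mult_op (gamma b m) h) x
                              = exp (2 * pi * \<i> * of_int m / of_real (b - 1)) * modul (of_int m) (Dphi b h) x)"
proof (intro allI impI conjI)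
  fix s m :: int and h :: "real \<Rightarrow> complex"
  have apow: "a powr (of_int s * real q) = b powr of_int (s * int p)"
  proof -
    have "a = b powr (real p / real q)" using assms(1,2,6)
      by (metis powr_log_cancel less_trans zero_less_one order_less_irrefl)
    then have "a powr (of_int s * real q) = b powr (real p / real q * (of_int s * real q))"
      by (simp add: powr_powr)
    also have "real p / real q * (of_int s * real q) = of_int (s * int p)" using assms(4) by simp
    finally show ?thesis .
  qed
  have AEn: "AE x in lborel. x \<notin> \<int>"
    by (rule AE_not_in, rule countable_imp_null_set_lborel) (simp add: Ints_def)
  have key: "Dphi b (dil (a powr (of_int s * real q)) h) x
                              = transl (- (of_int s * real p)) (Dphi b h) x" if x: "x \<notin> \<int>" for x
  proof -
    define n where "n = s * int p"
    have nn: "x - - (of_int s * real p) = x + of_int n" unfolding n_def by simp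
    have x2: "x + of_int n \<notin> \<int>" using x
      by (metis Ints_diff Ints_of_int add_diff_cancel_right')
    have fl: "\<lfloor>x + of_int n\<rfloor> = \<lfloor>x\<rfloor> + n" by simp
    have d2: "deriv (phi b) (x + of_int n) = b powr of_int n * deriv (phi b) x"
      unfolding phi_deriv[OF assms(2) x] phi_deriv[OF assms(2) x2] fl by (simp add: powr_add)
    show "Dphi b (dil (a powr (of_int s * real q)) h) x
                              = transl (- (of_int s * real p)) (Dphi b h) x"
      unfolding Dphi_def dil_def transl_def nn apow n_def[symmetric] d2 phi_shift[OF assms(2)]
      by (simp add: real_sqrt_mult mult.commute mult.left_commute)
  qed
  show "AE x in lborel. Dphi b (dil (a powr (of_int s * real q)) h) x
                              = transl (- (of_int s * real p)) (Dphi b h) x"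
    using AEn by (rule eventually_mono) (rule key)
  show "AE x in lborel. Dphi b (mult_op (gamma b m) h) x
                              = exp (2 * pi * \<i> * of_int m / of_real (b - 1)) * modul (of_int m) (Dphi b h) x"
    by (rule AE_I2) (simp add: Dphi_def mult_op_def modul_def gamma_phi[OF assms(2)] mult.commute mult.left_commute)
qed

end
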